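(* Let $f$ be a pdf supported on $[-\tfrac14,\tfrac14]$. For every integer $j\ne0$, $$|\hat f(j)|^2\le\frac{\|f*f\|_\infty}{\pi}\sin\Big(\frac{\pi}{\|f*f\|_\infty}\Big).$$
   Context: $\mathbb{T}=\mathbb{R}/\mathbb{Z}$; integrals are over $\mathbb{T}$. $\hat f(j)=\int f(x)e^{-2\pi ijx}\,dx$, $f*f(c)=\int f(x)f(c-x)\,dx$, $\|\cdot\|_\infty$ the essential supremum. A pdf is a nonnegative function in $L^2(\mathbb{T})$ with integral 1; $[-\tfrac14,\tfrac14]$ is regarded as a subset of $\mathbb{T}$. *)

theory Defs
  imports "HOL-Analysis.Analysis" "HOL-Probability.Essential_Supremum"
begin

text \<open>Functions on T = R/Z are represented as 1-periodic functions real => real;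
  integrals over T are integrals over the fundamental domain [0,1].\<close>

definition torus_periodic :: "(real \<Rightarrow> real) \<Rightarrow> bool" where
  "torus_periodic f \<longleftrightarrow> (\<forall>x. f (x + 1) = f x)"

definition T_fourier :: "(real \<Rightarrow> real) \<Rightarrow> int \<Rightarrow> complex" where
  "T_fourier f j = (LINT x:{0..1}|lborel. complex_of_real (f x) * cis (- 2 * pi * real_of_int j * x))"

definition T_conv :: "(real \<Rightarrow> real) \<Rightarrow> (real \<Rightarrow> real) \<Rightarrow> real \<Rightarrow> real" where
  "T_conv f g c = (LINT x:{0..1}|lborel. f x * g (c - x))"

definition T_sup_norm :: "(real \<Rightarrow> real) \<Rightarrow> ereal" where
  "T_sup_norm h = esssup (restrict_space lborel {0..1}) (\<lambda>x. ereal \<bar>h x\<bar>)"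

definition T_pdf :: "(real \<Rightarrow> real) \<Rightarrow> bool" where
  "T_pdf f \<longleftrightarrow> torus_periodic f \<and> f \<in> borel_measurable lborel
     \<and> (AE x in lborel. 0 \<le> f x)
     \<and> set_integrable lborel {0..1} (\<lambda>x. (f x)\<^sup>2)
     \<and> set_integrable lborel {0..1} f
     \<and> (LINT x:{0..1}|lborel. f x) = 1"

text \<open>Support in [-1/4,1/4] as a subset of T: f vanishes a.e. on the rest of the
  fundamental domain [-1/2,1/2] (hence, by periodicity, a.e. off [-1/4,1/4] + Z).\<close>
definition T_supported_quarter :: "(real \<Rightarrow> real) \<Rightarrow> bool" where
  "T_supported_quarter f \<longleftrightarrow> (AE x in lborel. (1/4 < \<bar>x\<bar> \<and> \<bar>x\<bar> \<le> 1/2) \<longrightarrow> f x = 0)"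

end

theory Submission
  imports Defs
begin


lemma trans_set_integral:
  fixes g :: "real \<Rightarrow> 'a::{banach, second_countable_topology}"
  shows "(LINT y:{y. y + s \<in> B}|lborel. g (y + s)) = (LINT y:B|lborel. g y)"
proof -
  have "(LINT y:B|lborel. g y) = (\<integral>x. indicator B x *\<^sub>R g x \<partial>lborel)"
    by (simp add: set_lebesgue_integral_def)
  also have "\<dots> = \<bar>1::real\<bar> *\<^sub>R (\<integral>x. indicator B (s + 1 * x) *\<^sub>R g (s + 1 * x) \<partial>lborel)"
    by (rule lborel_integral_real_affine) simp
  also have "\<dots> = (LINT y:{y. y + s \<in> B}|lborel. g (y + s))"
    by (simp add: set_lebesgue_integral_def indicator_def add.commute)
  finally show ?thesis ..
qed

lemma trans_set_integrable:
  fixes g :: "real \<Rightarrow> 'a::{banach, second_countable_topology}"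
  shows "set_integrable lborel {y. y + s \<in> B} (\<lambda>y. g (y + s)) \<longleftrightarrow> set_integrable lborel B g"
proof -
  have "set_integrable lborel B g \<longleftrightarrow> integrable lborel (\<lambda>x. indicator B (s + 1 * x) *\<^sub>R g (s + 1 * x))"
    unfolding set_integrable_def
    by (rule lborel_integrable_real_affine_iff[symmetric]) simp
  also have "\<dots> \<longleftrightarrow> set_integrable lborel {y. y + s \<in> B} (\<lambda>y. g (y + s))"
    by (simp add: set_integrable_def indicator_def add.commute)
  finally show ?thesis ..
qed

lemma Icc_shift: "{y::real. y + s \<in> {a..b}} = {a-s..b-s}" by auto
lemma Ico_shift: "{y::real. y + s \<in> {a..<b}} = {a-s..<b-s}" by auto

lemma periodic_int:
  assumes "\<forall>x. g (x + 1) = g x"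
  shows "g (x + real_of_int n) = g x"
proof -
  have nat: "g (y + real m) = g y" for y m
  proof (induction m)
    case (Suc m)
    have "g (y + real (Suc m)) = g ((y + real m) + 1)" by (simp add: algebra_simps)
    also have "\<dots> = g (y + real m)" using assms by (simp)
    finally show ?case using Suc by simp
  qed simp
  show ?thesis
  proof (cases "n \<ge> 0")
    case True
    then show ?thesis using nat[of x "nat n"] by simp
  next
    case False
    then have "g (x + real_of_int n + real (nat (-n))) = g (x + real_of_int n)" by (rule_tac nat)
    then show ?thesis using False by simp
  qed
qed

lemma periodic_shift:
  fixes g :: "real \<Rightarrow> 'a::{banach, second_countable_topology}"
  assumes per: "\<forall>x. g (x + 1) = g x" and int: "set_integrable lborel {0..1} g"
  shows "set_integrable lborel {0..1} (\<lambda>c. g (c + s)) \<and>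
    (LINT c:{0..1}|lborel. g (c + s)) = (LINT c:{0..1}|lborel. g c)"
proof -
  define r where "r = s - of_int \<lfloor>s\<rfloor>"
  have r: "0 \<le> r" "r < 1" unfolding r_def by linarith+
  have gs: "(\<lambda>c. g (c + s)) = (\<lambda>c. g (c + r))"
  proof
    fix c
    have "g (c + s) = g ((c + r) + of_int \<lfloor>s\<rfloor>)" by (simp add: r_def)
    also have "\<dots> = g (c + r)" by (rule periodic_int[OF per])
    finally show "g (c + s) = g (c + r)" .
  qed
  have g1: "(\<lambda>y. g (y + 1)) = g" using per by (auto)
  have gm1: "(\<lambda>y. g (y + -1)) = g"
  proof
    fix y show "g (y + -1) = g y" using periodic_int[OF per, of y "-1"] by simp
  qed
  have "set_integrable lborel {y. y + -1 \<in> {0..1}} (\<lambda>y. g (y + -1))"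
    using int by (subst trans_set_integrable)
  then have int12: "set_integrable lborel {1..2} g"
    unfolding gm1 Icc_shift by simp
  have int02: "set_integrable lborel {0..2} g"
  proof -
    have "set_integrable lborel ({0..1} \<union> {1..2}) g"
      by (rule set_integrable_Un[OF int int12]) auto
    moreover have "{0..1} \<union> {1..2} = {0::real..2}" by auto
    ultimately show ?thesis by simp
  qed
  have sub: "set_integrable lborel A g" if "A \<in> sets lborel" "A \<subseteq> {0..2}" for A
    by (rule set_integrable_subset[OF int02 that])
  have intr: "set_integrable lborel {r..r+1} g" by (rule sub) (use r in auto)
  have "set_integrable lborel {y. y + r \<in> {r..r+1}} (\<lambda>y. g (y + r))"
    using intr by (subst trans_set_integrable)
  then have I1: "set_integrable lborel {0..1} (\<lambda>c. g (c + s))"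
    unfolding gs Icc_shift by simp
  have meas: "set_borel_measurable lborel A g" if "A \<in> sets lborel" "A \<subseteq> {0..2}" for A
    using sub[OF that] unfolding set_borel_measurable_def set_integrable_def by (rule borel_measurable_integrable)
  have "(LINT c:{0..1}|lborel. g (c + s)) = (LINT y:{y. y + r \<in> {r..r+1}}|lborel. g (y + r))"
    unfolding gs Icc_shift by simp
  also have "\<dots> = (LINT y:{r..r+1}|lborel. g y)" by (rule trans_set_integral)
  also have "\<dots> = (LINT y:{r..<r+1}|lborel. g y)"
    apply (rule set_integral_cong_set[OF meas meas])
    using r apply auto[4]
    by (rule AE_mp[OF AE_lborel_singleton[of "r+1"]]) auto
  also have "\<dots> = (LINT y:({r..<1} \<union> {1..<r+1})|lborel. g y)"
  proof -
    have "{r..<r+1} = {r..<1} \<union> {1..<r+1}" using r by auto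
    then show ?thesis by simp
  qed
  also have "\<dots> = (LINT y:{r..<1}|lborel. g y) + (LINT y:{1..<r+1}|lborel. g y)"
    by (rule set_integral_Un) (use r in \<open>auto intro!: sub\<close>)
  also have "(LINT y:{1..<r+1}|lborel. g y) = (LINT y:{y. y + 1 \<in> {1..<r+1}}|lborel. g (y + 1))"
    by (rule trans_set_integral[symmetric])
  also have "\<dots> = (LINT y:{0..<r}|lborel. g y)"
    unfolding g1 Ico_shift by simp
  also have "(LINT y:{r..<1}|lborel. g y) + (LINT y:{0..<r}|lborel. g y)
      = (LINT y:({0..<r} \<union> {r..<1})|lborel. g y)"
    by (subst set_integral_Un) (use r in \<open>auto intro!: sub\<close>)
  also have "{0..<r} \<union> {r..<1} = {0..<1}" using r by auto
  also have "(LINT y:{0..<1}|lborel. g y) = (LINT y:{0..1}|lborel. g y)"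
    apply (rule set_integral_cong_set[OF meas meas])
    apply auto[4]
    by (rule AE_mp[OF AE_lborel_singleton[of "1"]]) auto
  finally show ?thesis using I1 by simp
qed



lemma refl_set_integral:
  fixes g :: "real \<Rightarrow> 'a::{banach, second_countable_topology}"
  shows "(LINT y:{y. s - y \<in> B}|lborel. g (s - y)) = (LINT y:B|lborel. g y)"
    and "set_integrable lborel {y. s - y \<in> B} (\<lambda>y. g (s - y)) \<longleftrightarrow> set_integrable lborel B g"
proof -
  have "(LINT y:B|lborel. g y) = (\<integral>x. indicator B x *\<^sub>R g x \<partial>lborel)"
    by (simp add: set_lebesgue_integral_def)
  also have "\<dots> = \<bar>-1::real\<bar> *\<^sub>R (\<integral>x. indicator B (s + -1 * x) *\<^sub>R g (s + -1 * x) \<partial>lborel)"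
    by (rule lborel_integral_real_affine) simp
  also have "\<dots> = (LINT y:{y. s - y \<in> B}|lborel. g (s - y))"
    by (simp add: set_lebesgue_integral_def indicator_def)
  finally show "(LINT y:{y. s - y \<in> B}|lborel. g (s - y)) = (LINT y:B|lborel. g y)" ..
  have "set_integrable lborel B g \<longleftrightarrow> integrable lborel (\<lambda>x. indicator B (s + -1 * x) *\<^sub>R g (s + -1 * x))"
    unfolding set_integrable_def
    by (rule lborel_integrable_real_affine_iff[symmetric]) simp
  also have "\<dots> \<longleftrightarrow> set_integrable lborel {y. s - y \<in> B} (\<lambda>y. g (s - y))"
    by (simp add: set_integrable_def indicator_def)
  finally show "set_integrable lborel {y. s - y \<in> B} (\<lambda>y. g (s - y)) \<longleftrightarrow> set_integrable lborel B g" ..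
qed

lemma periodic_refl:
  fixes g :: "real \<Rightarrow> 'a::{banach, second_countable_topology}"
  assumes per: "\<forall>x. g (x + 1) = g x" and int: "set_integrable lborel {0..1} g"
  shows "set_integrable lborel {0..1} (\<lambda>c. g (s - c)) \<and>
    (LINT c:{0..1}|lborel. g (s - c)) = (LINT c:{0..1}|lborel. g c)"
proof -
  have st: "{y. s - y \<in> {s-1..s}} = {0..1}" by auto
  have sh: "{y. y + (s - 1) \<in> {s-1..s}} = {0..1}" by auto
  note P = periodic_shift[OF per int, of "s - 1"]
  have i1: "set_integrable lborel {s-1..s} g"
    using P trans_set_integrable[of "s - 1" "{s-1..s}" g] sh by simp
  have "set_integrable lborel {0..1} (\<lambda>c. g (s - c))"
    using i1 refl_set_integral(2)[of s "{s-1..s}" g] st by simp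
  moreover have "(LINT c:{0..1}|lborel. g (s - c)) = (LINT c:{0..1}|lborel. g c)"
    using P trans_set_integral[of "s - 1" "{s-1..s}" g] sh refl_set_integral(1)[of s "{s-1..s}" g] st
    by simp
  ultimately show ?thesis by simp
qed

lemma E_periodic: "cis (- 2 * pi * real_of_int j * (x + 1)) = cis (- 2 * pi * real_of_int j * x)"
proof -
  have "cis (- 2 * pi * real_of_int j * (x + 1)) = cis (- 2 * pi * real_of_int j * x) * cis (2 * pi * real_of_int (-j))"
    by (simp add: cis_mult algebra_simps)
  also have "cis (2 * pi * real_of_int (-j)) = 1" by (rule cis_multiple_2pi) simp
  finally show ?thesis by simp
qed

lemma E_add: "cis (- 2 * pi * real_of_int j * c) = cis (- 2 * pi * real_of_int j * x) * cis (- 2 * pi * real_of_int j * (c - x))"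
  by (simp add: cis_mult algebra_simps)

lemma AE_refl:
  fixes f :: "real \<Rightarrow> real" assumes f[measurable]: "f \<in> borel_measurable borel" and ae: "AE y in lborel. 0 \<le> (f y::real)"
  shows "AE x in lborel. 0 \<le> f (s - x)"
proof -
  have "AE y in density (distr lborel borel (\<lambda>x::real. s + -1 * x)) (\<lambda>_. \<bar>-1::real\<bar>). 0 \<le> f y"
    using ae by (subst (asm) lborel_real_affine[of "-1" s]) auto
  then have "AE y in distr lborel borel (\<lambda>x::real. s + -1 * x). 0 \<le> f y"
    by (subst (asm) AE_density) auto
  then show ?thesis
    by (subst (asm) AE_distr_iff) auto
qed



lemma abs_mult_le_sq: "\<bar>a * b\<bar> \<le> ((a::real)\<^sup>2 + b\<^sup>2) / 2"
proof -
  have "2 * \<bar>a\<bar> * \<bar>b\<bar> \<le> \<bar>a\<bar>\<^sup>2 + \<bar>b\<bar>\<^sup>2" by (rule sum_squares_bound)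
  then show ?thesis by (simp add: abs_mult)
qed

lemma cis_meas[measurable]: "cis \<in> borel_measurable borel"
  by (intro borel_measurable_continuous_onI continuous_intros)

locale tpdf =
  fixes f :: "real \<Rightarrow> real"
  assumes pdf: "T_pdf f"
begin

lemma per: "\<forall>x. f (x + 1) = f x" using pdf by (simp add: T_pdf_def torus_periodic_def)
lemma meas[measurable]: "f \<in> borel_measurable borel" using pdf by (simp add: T_pdf_def)
lemma nonneg: "AE x in lborel. 0 \<le> f x" using pdf by (simp add: T_pdf_def)
lemma sq: "set_integrable lborel {0..1} (\<lambda>x. (f x)\<^sup>2)" using pdf by (simp add: T_pdf_def)
lemma int1: "set_integrable lborel {0..1} f" using pdf by (simp add: T_pdf_def)
lemma tot: "(LINT x:{0..1}|lborel. f x) = 1" using pdf by (simp add: T_pdf_def)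

lemma conv_int: "set_integrable lborel {0..1} (\<lambda>x. f x * f (c - x))"
proof (rule set_integrable_bound)
  have per2: "\<forall>x. (f (x + 1))\<^sup>2 = (f x)\<^sup>2" using per by simp
  have "set_integrable lborel {0..1} (\<lambda>x. (f (c - x))\<^sup>2)"
    using periodic_refl[OF per2 sq, of c] by simp
  then show "set_integrable lborel {0..1} (\<lambda>x. ((f x)\<^sup>2 + (f (c - x))\<^sup>2) / 2)"
    using sq by (intro set_integrable_divide set_integral_add) auto
  show "set_borel_measurable lborel {0..1} (\<lambda>x. f x * f (c - x))"
    unfolding set_borel_measurable_def by measurable
  show "AE x in lborel. x \<in> {0..1} \<longrightarrow> norm (f x * f (c - x)) \<le> norm (((f x)\<^sup>2 + (f (c - x))\<^sup>2) / 2)"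
    using abs_mult_le_sq by auto
qed

lemma conv_bound: "\<bar>T_conv f f c\<bar> \<le> (LINT x:{0..1}|lborel. (f x)\<^sup>2)"
proof -
  have per2: "\<forall>x. (f (x + 1))\<^sup>2 = (f x)\<^sup>2" using per by simp
  note R = periodic_refl[OF per2 sq, of c]
  have ib: "set_integrable lborel {0..1} (\<lambda>x. ((f x)\<^sup>2 + (f (c - x))\<^sup>2) / 2)"
    using sq R by (intro set_integrable_divide set_integral_add) auto
  have vb: "(LINT x:{0..1}|lborel. ((f x)\<^sup>2 + (f (c - x))\<^sup>2) / 2) = (LINT x:{0..1}|lborel. (f x)\<^sup>2)"
    using sq R by (simp add: set_integral_add)
  have "T_conv f f c \<le> (LINT x:{0..1}|lborel. ((f x)\<^sup>2 + (f (c - x))\<^sup>2) / 2)"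
    unfolding T_conv_def
    by (rule set_integral_mono[OF conv_int ib]) (use abs_mult_le_sq in \<open>smt (verit)\<close>)
  moreover have "- T_conv f f c \<le> (LINT x:{0..1}|lborel. ((f x)\<^sup>2 + (f (c - x))\<^sup>2) / 2)"
    unfolding T_conv_def set_integral_uminus[OF conv_int, symmetric]
    apply (rule set_integral_mono[OF _ ib])
    using conv_int apply (simp add: set_integrable_def)
    using abs_mult_le_sq by (smt (verit))
  ultimately show ?thesis using vb by linarith
qed

lemma conv_nonneg: "0 \<le> T_conv f f c"
proof -
  have "AE x in lborel. 0 \<le> f (c - x)" by (rule AE_refl[OF meas nonneg])
  then have "AE x in lborel. 0 \<le> indicator {0..1} x *\<^sub>R (f x * f (c - x))"
    using nonneg by eventually_elim (auto simp: indicator_def)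
  then show ?thesis unfolding T_conv_def set_lebesgue_integral_def
    by (rule integral_nonneg_AE)
qed

abbreviation "EE j x \<equiv> cis (- 2 * pi * real_of_int j * x)"

lemma F_int: "set_integrable lborel {0..1} (\<lambda>x. complex_of_real (f x) * EE j x)"
proof (rule set_integrable_bound[OF int1])
  show "set_borel_measurable lborel {0..1} (\<lambda>x. complex_of_real (f x) * EE j x)"
    unfolding set_borel_measurable_def by measurable
  show "AE x in lborel. x \<in> {0..1} \<longrightarrow> norm (complex_of_real (f x) * EE j x) \<le> norm (f x)"
    by (simp add: norm_mult)
qed

lemma F_per: "\<forall>x. complex_of_real (f (x + 1)) * EE j (x + 1) = complex_of_real (f x) * EE j x"
  using per E_periodic by simp

lemma conv_fourier:
  "(LINT c:{0..1}|lborel. complex_of_real (T_conv f f c) * EE j c) = (T_fourier f j)\<^sup>2"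
proof -
  define I where "I = {0..1::real}"
  define F where "F x = complex_of_real (f x) * EE j x" for x
  define fh where "fh = T_fourier f j"
  have fh: "fh = (LINT x:I|lborel. F x)" unfolding fh_def T_fourier_def F_def I_def ..
  have FI: "set_integrable lborel I F" unfolding F_def I_def by (rule F_int)
  have Fm[measurable]: "F \<in> borel_measurable borel" unfolding F_def by measurable
  have Fsh: "set_integrable lborel I (\<lambda>c. F (c + s)) \<and> (LINT c:I|lborel. F (c + s)) = fh" for s
    using periodic_shift[OF F_per F_int, of s] unfolding F_def I_def fh_def T_fourier_def by simp
  define k where "k x c = (indicator I x * indicator I c) *\<^sub>R (F x * F (c - x))" for x c

  have km: "case_prod k \<in> borel_measurable (lborel \<Otimes>\<^sub>M lborel)"
    unfolding k_def I_def by measurable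
  have kint: "integrable (lborel \<Otimes>\<^sub>M lborel) (case_prod k)"
  proof (rule lborel_pair.Fubini_integrable[OF km])
    have absf: "set_integrable lborel I (\<lambda>x. \<bar>f x\<bar>)" using int1 unfolding I_def by (rule set_integrable_abs)
    have perabs: "\<forall>x. \<bar>f (x + 1)\<bar> = \<bar>f x\<bar>" using per by simp
    define A where "A = (LINT x:I|lborel. \<bar>f x\<bar>)"
    have "(\<integral>c. norm (k x c) \<partial>lborel) = (indicator I x * \<bar>f x\<bar>) * A" for x
    proof -
      have "(\<lambda>c. norm (k x c)) = (\<lambda>c. (indicator I x * \<bar>f x\<bar>) * (indicator I c *\<^sub>R \<bar>f (c + - x)\<bar>))"
        by (auto simp: k_def F_def norm_mult indicator_def)
      then have "(\<integral>c. norm (k x c) \<partial>lborel) = (indicator I x * \<bar>f x\<bar>) * (LINT c:I|lborel. \<bar>f (c + - x)\<bar>)"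
        by (simp add: set_lebesgue_integral_def)
      also have "(LINT c:I|lborel. \<bar>f (c + - x)\<bar>) = A"
        using periodic_shift[OF perabs absf[unfolded I_def], of "-x"] unfolding A_def I_def by simp
      finally show ?thesis .
    qed
    moreover have "integrable lborel (\<lambda>x. (indicator I x * \<bar>f x\<bar>) * A)"
      using absf unfolding set_integrable_def by simp
    ultimately show "integrable lborel (\<lambda>x. \<integral>c. norm (case_prod k (x, c)) \<partial>lborel)" by simp
    show "AE x in lborel. integrable lborel (\<lambda>c. case_prod k (x, c))"
    proof (rule AE_I2)
      fix x
      have eq: "(\<lambda>c. case_prod k (x, c)) = (\<lambda>c. (indicator I x *\<^sub>R F x) * (indicator I c *\<^sub>R F (c + - x)))"
        by (auto simp: k_def indicator_def)
      have "integrable lborel (\<lambda>c. indicator I c *\<^sub>R F (c + - x))"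
        using Fsh[of "-x"] unfolding set_integrable_def by simp
      then have "integrable lborel (\<lambda>c. (indicator I x *\<^sub>R F x) * (indicator I c *\<^sub>R F (c + - x)))"
        by (rule integrable_mult_right)
      then show "integrable lborel (\<lambda>c. case_prod k (x, c))" by (simp only: eq)
    qed
  qed
  have L: "(\<integral>c. (\<integral>x. k x c \<partial>lborel) \<partial>lborel) = (LINT c:I|lborel. complex_of_real (T_conv f f c) * EE j c)"
  proof -
    have "(\<integral>x. k x c \<partial>lborel) = indicator I c *\<^sub>R (complex_of_real (T_conv f f c) * EE j c)" for c
    proof -
      have "(\<lambda>x. k x c) = (\<lambda>x. complex_of_real (indicator I x * (f x * f (c - x))) * (indicator I c *\<^sub>R EE j c))"
      proof
        fix x
        show "k x c = complex_of_real (indicator I x * (f x * f (c - x))) * (indicator I c *\<^sub>R EE j c)"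
          by (subst E_add[of j c x]) (simp add: k_def F_def indicator_def)
      qed
      then have "(\<integral>x. k x c \<partial>lborel) = (\<integral>x. complex_of_real (indicator I x * (f x * f (c - x))) * (indicator I c *\<^sub>R EE j c) \<partial>lborel)"
        by (simp only:)
      also have "\<dots> = (\<integral>x. complex_of_real (indicator I x * (f x * f (c - x))) \<partial>lborel) * (indicator I c *\<^sub>R EE j c)"
        by (rule integral_mult_left_zero)
      also have "\<dots> = complex_of_real (\<integral>x. indicator I x * (f x * f (c - x)) \<partial>lborel) * (indicator I c *\<^sub>R EE j c)"
        by (simp only: integral_complex_of_real)
      finally have "(\<integral>x. k x c \<partial>lborel) = complex_of_real (\<integral>x. indicator I x * (f x * f (c - x)) \<partial>lborel) * (indicator I c *\<^sub>R EE j c)" .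
      then show ?thesis unfolding T_conv_def set_lebesgue_integral_def I_def by (simp add: indicator_def)
    qed
    then show ?thesis by (simp add: set_lebesgue_integral_def)
  qed
  have R: "(\<integral>x. (\<integral>c. k x c \<partial>lborel) \<partial>lborel) = fh * fh"
  proof -
    have "(\<integral>c. k x c \<partial>lborel) = (indicator I x *\<^sub>R F x) * fh" for x
    proof -
      have "(\<lambda>c. k x c) = (\<lambda>c. (indicator I x *\<^sub>R F x) * (indicator I c *\<^sub>R F (c + - x)))"
        by (auto simp: k_def indicator_def)
      then have "(\<integral>c. k x c \<partial>lborel) = (\<integral>c. (indicator I x *\<^sub>R F x) * (indicator I c *\<^sub>R F (c + - x)) \<partial>lborel)"
        by (simp only:)
      also have "\<dots> = (indicator I x *\<^sub>R F x) * (\<integral>c. indicator I c *\<^sub>R F (c + - x) \<partial>lborel)"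
        by (rule integral_mult_right_zero)
      finally have "(\<integral>c. k x c \<partial>lborel) = (indicator I x *\<^sub>R F x) * (LINT c:I|lborel. F (c + - x))"
        by (simp only: set_lebesgue_integral_def)
      then show ?thesis using Fsh[of "-x"] by simp
    qed
    then have "(\<integral>x. (\<integral>c. k x c \<partial>lborel) \<partial>lborel) = (\<integral>x. (indicator I x *\<^sub>R F x) * fh \<partial>lborel)"
      by (simp only:)
    also have "\<dots> = (\<integral>x. indicator I x *\<^sub>R F x \<partial>lborel) * fh"
      by (rule integral_mult_left_zero)
    finally show ?thesis using fh by (simp only: set_lebesgue_integral_def)
  qed
  have "(\<integral>c. (\<integral>x. k x c \<partial>lborel) \<partial>lborel) = (\<integral>x. (\<integral>c. k x c \<partial>lborel) \<partial>lborel)"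
    by (rule lborel_pair.Fubini_integral[OF kint])
  then show ?thesis using L R unfolding fh_def I_def by (simp add: power2_eq_square)
qed

end



definition GG :: "real \<Rightarrow> real \<Rightarrow> real" where
  "GG t y = max (cos (2 * pi * y) - t) 0"

lemma GG_cont: "continuous_on A (GG t)"
  unfolding GG_def by (intro continuous_intros)

lemma GG_cont': "continuous_on A (\<lambda>y. GG t (a * y + b))"
  unfolding GG_def by (intro continuous_intros)

lemma GG_per: "\<forall>x. GG t (x + 1) = GG t x"
proof
  fix x
  have "cos (2 * pi * (x + 1)) = cos (2 * pi * x + 2 * pi)" by (simp add: algebra_simps)
  then show "GG t (x + 1) = GG t x" unfolding GG_def by simp
qed

lemma GG_even: "GG t (- y) = GG t y"
  unfolding GG_def by simp

lemma GG_int: "set_integrable lborel {a..b} (\<lambda>y. GG t (c * y + d))"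
  by (rule borel_integrable_atLeastAtMost') (rule GG_cont')

lemma GG_integral:
  assumes a: "0 < a" "a \<le> pi"
  shows "(LINT y:{0..1}|lborel. GG (cos a) y) = (sin a - a * cos a) / pi"
proof -
  define b where "b = a / (2 * pi)"
  have b: "0 < b" "b \<le> 1/2" using a by (auto simp: b_def field_simps)
  have i01: "set_integrable lborel {0..1} (GG (cos a))"
    using GG_int[of 0 1 "cos a" 1 0] by simp
  have "(LINT y:{0..1}|lborel. GG (cos a) y) = (LINT y:{0..1}|lborel. GG (cos a) (y + - (1/2)))"
    using periodic_shift[OF GG_per i01, of "- (1/2)"] by simp
  also have "\<dots> = (LINT y:{y. y + - (1/2) \<in> {-1/2..1/2}}|lborel. GG (cos a) (y + - (1/2)))"
  proof -
    have "{y. y + - (1/2) \<in> {-1/2..1/2}} = {0..1::real}" by auto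
    then show ?thesis by simp
  qed
  also have "\<dots> = (LINT y:{-1/2..1/2}|lborel. GG (cos a) y)"
    by (rule trans_set_integral)
  also have "\<dots> = (\<integral>y. indicator {-b..b} y *\<^sub>R (cos (2 * pi * y) - cos a) \<partial>lborel)"
    unfolding set_lebesgue_integral_def
  proof (rule Bochner_Integration.integral_cong[OF refl])
    fix y :: real
    show "indicator {-1/2..1/2} y *\<^sub>R GG (cos a) y = indicator {-b..b} y *\<^sub>R (cos (2 * pi * y) - cos a)"
    proof (cases "\<bar>y\<bar> \<le> 1/2")
      case True
      have cy: "cos (2 * pi * y) = cos (2 * pi * \<bar>y\<bar>)"
        by (cases "y \<ge> 0") (auto simp: abs_if)
      have "cos a \<le> cos (2 * pi * \<bar>y\<bar>) \<longleftrightarrow> 2 * pi * \<bar>y\<bar> \<le> a"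
        using True a by (intro cos_mono_le_eq) auto
      also have "\<dots> \<longleftrightarrow> \<bar>y\<bar> \<le> b" unfolding b_def by (auto simp: field_simps)
      finally have eq: "cos a \<le> cos (2 * pi * y) \<longleftrightarrow> y \<in> {-b..b}" unfolding cy by auto
      show ?thesis using True eq unfolding GG_def by (auto simp: indicator_def)
    next
      case False
      then show ?thesis using b by (auto simp: indicator_def)
    qed
  qed
  also have "\<dots> = (sin (2 * pi * b) / (2 * pi) - cos a * b) - (sin (2 * pi * (-b)) / (2 * pi) - cos a * (-b))"
  proof (rule integral_FTC_atLeastAtMost)
    show "- b \<le> b" using b by simp
    show "continuous_on {- b..b} (\<lambda>y. cos (2 * pi * y) - cos a)" by (intro continuous_intros)
    fix x :: real
    show "((\<lambda>y. sin (2 * pi * y) / (2 * pi) - cos a * y) has_vector_derivative cos (2 * pi * x) - cos a) (at x within {- b..b})"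
      unfolding has_real_derivative_iff_has_vector_derivative[symmetric]
      by (auto intro!: derivative_eq_intros)
  qed
  also have "\<dots> = (sin a - a * cos a) / pi"
    unfolding b_def by (simp add: field_simps)
  finally show ?thesis .
qed

lemma scale_nat:
  fixes g :: "real \<Rightarrow> real"
  assumes per: "\<forall>x. g (x + 1) = g x" and cont: "continuous_on UNIV g" and n: "n > 0"
  shows "(LINT x:{0..1}|lborel. g (real n * x)) = (LINT x:{0..1}|lborel. g x)"
proof -
  have intc: "set_integrable lborel {a..b} g" for a b
    by (rule borel_integrable_atLeastAtMost') (rule continuous_on_subset[OF cont], simp)
  have into: "set_integrable lborel {a..<b} g" for a b
    by (rule set_integrable_subset[OF intc[of a b]]) auto
  have gb[measurable]: "g \<in> borel_measurable borel" using cont by (rule borel_measurable_continuous_onI)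
  have gm: "set_borel_measurable lborel A g" if [measurable]: "A \<in> sets borel" for A
    unfolding set_borel_measurable_def by measurable
  have step1: "(LINT y:{0..<real m}|lborel. g y) = real m * (LINT y:{0..<1}|lborel. g y)" for m
  proof (induction m)
    case 0 then show ?case by (simp add: set_lebesgue_integral_def)
  next
    case (Suc m)
    have "{0..<real (Suc m)} = {0..<real m} \<union> {real m..<real m + 1}" by auto
    then have "(LINT y:{0..<real (Suc m)}|lborel. g y) = (LINT y:{0..<real m}|lborel. g y) + (LINT y:{real m..<real m + 1}|lborel. g y)"
      by (simp add: set_integral_Un into)
    also have "(LINT y:{real m..<real m + 1}|lborel. g y) = (LINT y:{y. y + real m \<in> {real m..<real m + 1}}|lborel. g (y + real m))"
      by (rule trans_set_integral[symmetric])
    also have "\<dots> = (LINT y:{0..<1}|lborel. g y)"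
    proof -
      have "{y. y + real m \<in> {real m..<real m + 1}} = {0..<1::real}" by auto
      moreover have "(\<lambda>y. g (y + real m)) = g"
        using periodic_int[OF per, of _ "int m"] by auto
      ultimately show ?thesis by simp
    qed
    finally show ?case using Suc by (simp add: algebra_simps)
  qed
  have step2: "(LINT y:{0..<real n}|lborel. g y) = real n * (LINT x:{0..<1}|lborel. g (real n * x))"
  proof -
    have "(LINT y:{0..<real n}|lborel. g y) = (\<integral>y. indicator {0..<real n} y *\<^sub>R g y \<partial>lborel)"
      by (simp add: set_lebesgue_integral_def)
    also have "\<dots> = \<bar>real n\<bar> *\<^sub>R (\<integral>x. indicator {0..<real n} (0 + real n * x) *\<^sub>R g (0 + real n * x) \<partial>lborel)"
      by (rule lborel_integral_real_affine) (use n in simp)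
    also have "(\<lambda>x. indicator {0..<real n} (0 + real n * x) *\<^sub>R g (0 + real n * x)) = (\<lambda>x. indicator {0..<1} x *\<^sub>R g (real n * x))"
      using n by (auto simp: indicator_def zero_le_mult_iff)
    finally show ?thesis by (simp add: set_lebesgue_integral_def)
  qed
  have gnm: "set_borel_measurable lborel A (\<lambda>x. g (real n * x))" if [measurable]: "A \<in> sets borel" for A
    unfolding set_borel_measurable_def by measurable
  have c1: "(LINT x:{0..1}|lborel. g (real n * x)) = (LINT x:{0..<1}|lborel. g (real n * x))"
    apply (rule set_integral_cong_set[OF gnm gnm])
    apply simp_all
    by (rule AE_mp[OF AE_lborel_singleton[of "1"]]) auto
  have c2: "(LINT x:{0..1}|lborel. g x) = (LINT x:{0..<1}|lborel. g x)"
    apply (rule set_integral_cong_set[OF gm gm])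
    apply simp_all
    by (rule AE_mp[OF AE_lborel_singleton[of "1"]]) auto
  show ?thesis using step1[of n] step2 n c1 c2 by simp
qed

lemma GG_scale_nat:
  assumes n: "n > 0"
  shows "(LINT c:{0..1}|lborel. GG t (real n * c + s)) = (LINT c:{0..1}|lborel. GG t c)"
proof -
  define g2 where "g2 x = GG t (real n * x)" for x
  have per2: "\<forall>x. g2 (x + 1) = g2 x"
  proof
    fix x
    have "g2 (x + 1) = GG t (real n * x + real_of_int (int n))" unfolding g2_def by (simp add: algebra_simps)
    also have "\<dots> = g2 x" unfolding g2_def by (rule periodic_int[OF GG_per])
    finally show "g2 (x + 1) = g2 x" .
  qed
  have cont2: "continuous_on UNIV g2" unfolding g2_def using GG_cont'[of UNIV t "real n" 0] by simp
  have int2: "set_integrable lborel {0..1} g2" unfolding g2_def using GG_int[of 0 1 t "real n" 0] by simp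
  have "(LINT c:{0..1}|lborel. GG t (real n * c + s)) = (LINT c:{0..1}|lborel. g2 (c + s / real n))"
    unfolding g2_def using n by (simp add: algebra_simps)
  also have "\<dots> = (LINT c:{0..1}|lborel. g2 c)" using periodic_shift[OF per2 int2] by simp
  also have "\<dots> = (LINT c:{0..1}|lborel. GG t c)" unfolding g2_def by (rule scale_nat[OF GG_per GG_cont n])
  finally show ?thesis .
qed

lemma GG_scale:
  assumes j: "j \<noteq> 0"
  shows "(LINT c:{0..1}|lborel. GG t (real_of_int j * c + s)) = (LINT c:{0..1}|lborel. GG t c)"
proof (cases "j > 0")
  case True
  then have "real_of_int j = real (nat j)" by simp
  then show ?thesis using GG_scale_nat[of "nat j" t s] True by simp
next
  case False
  then have jn: "real_of_int j = - real (nat (-j))" using j by simp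
  have "(\<lambda>c. GG t (real_of_int j * c + s)) = (\<lambda>c. GG t (real (nat (-j)) * c + - s))"
  proof
    fix c
    have "GG t (real_of_int j * c + s) = GG t (- (real (nat (-j)) * c + - s))" unfolding jn by (simp add: algebra_simps)
    then show "GG t (real_of_int j * c + s) = GG t (real (nat (-j)) * c + - s)" by (simp only: GG_even)
  qed
  then show ?thesis using GG_scale_nat[of "nat (-j)" t "-s"] False j by simp
qed

lemma bathtub:
  fixes h :: "real \<Rightarrow> real" and j :: int and M :: real
  assumes j: "j \<noteq> 0" and hm[measurable]: "h \<in> borel_measurable borel"
    and hb: "AE c in lborel. c \<in> {0..1} \<longrightarrow> 0 \<le> h c \<and> h c \<le> M"
    and hi: "set_integrable lborel {0..1} h" and h1: "(LINT c:{0..1}|lborel. h c) = 1"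
  shows "cmod (LINT c:{0..1}|lborel. complex_of_real (h c) * cis (- 2 * pi * real_of_int j * c))
    \<le> M / pi * sin (pi / M)"
proof -
  have ci: "set_integrable lborel {0..1::real} (\<lambda>_. M)"
    by (rule borel_integrable_atLeastAtMost') (rule continuous_on_const)
  have "(LINT c:{0..1}|lborel. h c) \<le> (LINT c:{0..1::real}|lborel. M)"
    by (rule set_integral_mono_AE[OF hi ci]) (use hb in eventually_elim, auto)
  also have "(LINT c:{0..1::real}|lborel. M) = M" by (simp add: set_integral_const)
  finally have M1: "1 \<le> M" using h1 by simp
  define a where "a = pi / M"
  have a: "0 < a" "a \<le> pi" using M1 by (auto simp: a_def field_simps)
  define t where "t = cos a"
  define z where "z = (LINT c:{0..1}|lborel. complex_of_real (h c) * cis (- 2 * pi * real_of_int j * c))"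
  define \<theta> where "\<theta> = Arg z"
  define s where "s = \<theta> / (2 * pi)"
  have zi: "set_integrable lborel {0..1} (\<lambda>c. complex_of_real (h c) * cis (- 2 * pi * real_of_int j * c))"
  proof (rule set_integrable_bound[OF hi])
    show "set_borel_measurable lborel {0..1} (\<lambda>c. complex_of_real (h c) * cis (- 2 * pi * real_of_int j * c))"
      unfolding set_borel_measurable_def by measurable
  qed (simp add: norm_mult)
  have cz: "cmod z = Re (cis (- \<theta>) * z)"
  proof -
    have "z = complex_of_real (cmod z) * cis \<theta>" unfolding \<theta>_def
      using rcis_cmod_Arg[of z] by (simp add: rcis_def)
    then have "cis (- \<theta>) * z = complex_of_real (cmod z) * (cis (- \<theta>) * cis \<theta>)" by (metis mult.left_commute)
    also have "cis (- \<theta>) * cis \<theta> = 1" by (simp add: cis_mult)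
    finally show ?thesis by simp
  qed
  have pw: "Re (indicator {0..1} c *\<^sub>R (cis (- \<theta>) * (complex_of_real (h c) * cis (- 2 * pi * real_of_int j * c))))
      = indicator {0..1} c *\<^sub>R (h c * cos (2 * pi * (real_of_int j * c + s)))" for c
  proof -
    have "cis (- \<theta>) * cis (- 2 * pi * real_of_int j * c) = cis (- (2 * pi * (real_of_int j * c + s)))"
      by (simp add: cis_mult s_def algebra_simps)
    then have "cis (- \<theta>) * (complex_of_real (h c) * cis (- 2 * pi * real_of_int j * c)) = complex_of_real (h c) * cis (- (2 * pi * (real_of_int j * c + s)))"
      by (metis mult.left_commute)
    then have "Re (indicator {0..1} c *\<^sub>R (cis (- \<theta>) * (complex_of_real (h c) * cis (- 2 * pi * real_of_int j * c))))
      = Re (indicator {0..1} c *\<^sub>R (complex_of_real (h c) * cis (- (2 * pi * (real_of_int j * c + s)))))"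
      by (simp only:)
    also have "\<dots> = indicator {0..1} c *\<^sub>R (h c * cos (2 * pi * (real_of_int j * c + s)))"
      by simp
    finally show ?thesis .
  qed
  have "Re (cis (- \<theta>) * z) = (LINT c:{0..1}|lborel. h c * cos (2 * pi * (real_of_int j * c + s)))"
  proof -
    have "cis (- \<theta>) * z = (LINT c:{0..1}|lborel. cis (- \<theta>) * (complex_of_real (h c) * cis (- 2 * pi * real_of_int j * c)))"
      unfolding z_def by simp
    moreover have "integrable lborel (\<lambda>c. indicator {0..1} c *\<^sub>R (cis (- \<theta>) * (complex_of_real (h c) * cis (- 2 * pi * real_of_int j * c))))"
      using set_integrable_mult_right[OF zi, of "cis (- \<theta>)"] unfolding set_integrable_def by simp
    ultimately show ?thesis
      unfolding set_lebesgue_integral_def by (simp only: integral_Re[symmetric] pw)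
  qed
  also have "\<dots> \<le> (LINT c:{0..1}|lborel. M * GG t (real_of_int j * c + s) + t * h c)"
  proof (rule set_integral_mono_AE)
    show "set_integrable lborel {0..1} (\<lambda>c. h c * cos (2 * pi * (real_of_int j * c + s)))"
    proof (rule set_integrable_bound[OF hi])
      show "set_borel_measurable lborel {0..1} (\<lambda>c. h c * cos (2 * pi * (real_of_int j * c + s)))"
        unfolding set_borel_measurable_def by measurable
    qed (simp add: abs_mult mult_left_le)
    show "set_integrable lborel {0..1} (\<lambda>c. M * GG t (real_of_int j * c + s) + t * h c)"
      using GG_int[of 0 1 t "real_of_int j" s] hi by (intro set_integral_add) auto
    show "AE c\<in>{0..1} in lborel. h c * cos (2 * pi * (real_of_int j * c + s)) \<le> M * GG t (real_of_int j * c + s) + t * h c"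
      using hb
    proof eventually_elim
      case (elim c)
      show ?case
      proof
        assume c: "c \<in> {0..1}"
        define C where "C = cos (2 * pi * (real_of_int j * c + s))"
        have hc: "0 \<le> h c" "h c \<le> M" using elim c by auto
        have "h c * (C - t) \<le> M * max (C - t) 0"
        proof (cases "C - t \<ge> 0")
          case True then show ?thesis using hc by (simp add: mult_right_mono)
        next
          case False then show ?thesis using hc M1 by (simp add: mult_nonneg_nonpos)
        qed
        then show "h c * C \<le> M * GG t (real_of_int j * c + s) + t * h c"
          unfolding GG_def C_def by (simp add: algebra_simps)
      qed
    qed
  qed
  also have "\<dots> = M * (LINT c:{0..1}|lborel. GG t (real_of_int j * c + s)) + t * 1"
    using GG_int[of 0 1 t "real_of_int j" s] hi h1 by (simp add: set_integral_add)
  also have "\<dots> = M * ((sin a - a * cos a) / pi) + t"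
    unfolding GG_scale[OF j] t_def GG_integral[OF a] by simp
  also have "\<dots> = M / pi * sin (pi / M)"
    using M1 unfolding t_def a_def by (simp add: field_simps)
  finally show ?thesis using cz unfolding z_def by simp
qed



theorem lemma2p14:
  fixes f :: "real \<Rightarrow> real" and j :: int
  assumes "T_pdf f" and "T_supported_quarter f" and "j \<noteq> 0"
  shows "(cmod (T_fourier f j))\<^sup>2
    \<le> real_of_ereal (T_sup_norm (T_conv f f)) / pi * sin (pi / real_of_ereal (T_sup_norm (T_conv f f)))"
proof -
  interpret tpdf f by unfold_locales (rule assms(1))
  define h where "h = T_conv f f"
  have hm[measurable]: "h \<in> borel_measurable borel"
    unfolding h_def T_conv_def set_lebesgue_integral_def by measurable
  define B where "B = (LINT x:{0..1}|lborel. (f x)\<^sup>2)"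
  have hbd: "\<bar>h c\<bar> \<le> B" for c unfolding h_def B_def by (rule conv_bound)
  have hnn: "0 \<le> h c" for c unfolding h_def by (rule conv_nonneg)
  have ci: "set_integrable lborel {0..1::real} (\<lambda>_. B)"
    by (rule borel_integrable_atLeastAtMost') (rule continuous_on_const)
  have hi: "set_integrable lborel {0..1} h"
  proof (rule set_integrable_bound[OF ci])
    show "set_borel_measurable lborel {0..1} h" unfolding set_borel_measurable_def by measurable
  qed (use hbd in \<open>auto intro: order_trans[OF _ abs_ge_self]\<close>)
  have h1: "(LINT c:{0..1}|lborel. h c) = 1"
  proof -
    have "(LINT c:{0..1}|lborel. complex_of_real (h c) * cis (- 2 * pi * real_of_int 0 * c)) = (T_fourier f 0)\<^sup>2"
      unfolding h_def by (rule conv_fourier)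
    moreover have "T_fourier f 0 = 1"
      unfolding T_fourier_def using tot by (simp add: set_integral_complex_of_real)
    ultimately have "complex_of_real (LINT c:{0..1}|lborel. h c) = 1"
      by (simp add: set_integral_complex_of_real)
    then show ?thesis by (metis of_real_eq_1_iff)
  qed
  define N where "N = restrict_space lborel {0..1::real}"
  define ES where "ES = esssup N (\<lambda>x. ereal \<bar>h x\<bar>)"
  have ESdef: "T_sup_norm (T_conv f f) = ES" unfolding ES_def N_def T_sup_norm_def h_def ..
  have em[measurable]: "(\<lambda>x. ereal \<bar>h x\<bar>) \<in> borel_measurable N"
    unfolding N_def by (rule measurable_restrict_space1) measurable
  have "ES \<le> ereal B" unfolding ES_def
    by (rule esssup_I[OF em]) (use hbd in auto)
  moreover have "0 \<le> ES"
  proof -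
    have "esssup N (\<lambda>x. 0) \<le> ES" unfolding ES_def
      by (rule esssup_mono) auto
    moreover have "esssup N (\<lambda>x. 0::ereal) = 0"
      by (rule esssup_const) (simp add: N_def emeasure_restrict_space)
    ultimately show ?thesis by simp
  qed
  ultimately obtain Mv where Mv: "ES = ereal Mv" by (cases ES) auto
  have "AE x in N. ereal \<bar>h x\<bar> \<le> ES" unfolding ES_def by (rule esssup_AE)
  then have "AE x in lborel. x \<in> {0..1} \<longrightarrow> ereal \<bar>h x\<bar> \<le> ES"
    unfolding N_def by (subst (asm) AE_restrict_space_iff) auto
  then have hb: "AE c in lborel. c \<in> {0..1} \<longrightarrow> 0 \<le> h c \<and> h c \<le> Mv"
    unfolding Mv by eventually_elim (use hnn in \<open>auto simp: abs_le_iff\<close>)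
  have "cmod (LINT c:{0..1}|lborel. complex_of_real (h c) * cis (- 2 * pi * real_of_int j * c)) \<le> Mv / pi * sin (pi / Mv)"
    by (rule bathtub[OF assms(3) hm hb hi h1])
  moreover have "(LINT c:{0..1}|lborel. complex_of_real (h c) * cis (- 2 * pi * real_of_int j * c)) = (T_fourier f j)\<^sup>2"
    unfolding h_def by (rule conv_fourier)
  ultimately show ?thesis unfolding ESdef Mv by (simp add: norm_power)
qed


end
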